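(* Let $K_n$ be the complete graph on $n$ vertices. Then $$\liminf_{p\to\infty}\|M_{K_n}\|_p^p\geq \sup_{\alpha>1,\ k\in\{1,\dots,n\}}\frac{k\alpha^{n/k}+\alpha(n-k)}{k\alpha^{n/k}+n-k}.$$
   Context: For a finite connected graph $G=(V,E)$ with graph distance $d_G$ and $f:V\to\mathbb{R}$, $M_Gf(v)=\sup_{r\geq 0}\frac{1}{|B(v,r)|}\sum_{u\in B(v,r)}|f(u)|$, where $B(v,r)=\{u\in V: d_G(u,v)\le r\}$. For $g:V\to\mathbb{R}$, $\|g\|_p=(\sum_{v\in V}|g(v)|^p)^{1/p}$ and $\|M_G\|_p=\sup_{f\neq 0}\|M_Gf\|_p/\|f\|_p$. *)

theory Defs
  imports "HOL-Analysis.Analysis" "HOL-Library.Extended_Real"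
begin

definition is_walk :: "'a set \<Rightarrow> ('a \<Rightarrow> 'a \<Rightarrow> bool) \<Rightarrow> 'a list \<Rightarrow> bool" where
  "is_walk V E xs \<longleftrightarrow> xs \<noteq> [] \<and> set xs \<subseteq> V \<and>
     (\<forall>i. Suc i < length xs \<longrightarrow> E (xs ! i) (xs ! Suc i))"

definition gdist :: "'a set \<Rightarrow> ('a \<Rightarrow> 'a \<Rightarrow> bool) \<Rightarrow> 'a \<Rightarrow> 'a \<Rightarrow> nat" where
  "gdist V E u v = (LEAST k. \<exists>xs. is_walk V E xs \<and> hd xs = u \<and> last xs = v \<and> length xs = Suc k)"

definition gball :: "'a set \<Rightarrow> ('a \<Rightarrow> 'a \<Rightarrow> bool) \<Rightarrow> 'a \<Rightarrow> real \<Rightarrow> 'a set" where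
  "gball V E v r = {u \<in> V. real (gdist V E u v) \<le> r}"

definition maxfun :: "'a set \<Rightarrow> ('a \<Rightarrow> 'a \<Rightarrow> bool) \<Rightarrow> ('a \<Rightarrow> real) \<Rightarrow> 'a \<Rightarrow> real" where
  "maxfun V E f v = (SUP r\<in>{0..}. (\<Sum>u\<in>gball V E v r. \<bar>f u\<bar>) / real (card (gball V E v r)))"

definition pnorm :: "'a set \<Rightarrow> real \<Rightarrow> ('a \<Rightarrow> real) \<Rightarrow> real" where
  "pnorm V p g = (\<Sum>v\<in>V. \<bar>g v\<bar> powr p) powr (1 / p)"

definition maxop_norm :: "'a set \<Rightarrow> ('a \<Rightarrow> 'a \<Rightarrow> bool) \<Rightarrow> real \<Rightarrow> real" where
  "maxop_norm V E p = (SUP f\<in>{f. \<exists>v\<in>V. f v \<noteq> 0}. pnorm V p (maxfun V E f) / pnorm V p f)"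

definition Kn_V :: "nat \<Rightarrow> nat set" where "Kn_V n = {0..<n}"
definition Kn_E :: "nat \<Rightarrow> nat \<Rightarrow> bool" where "Kn_E u v \<longleftrightarrow> u \<noteq> v"

end

theory Submission
  imports Defs
begin

lemma gdist_Kn:
  assumes "u \<in> Kn_V n" "v \<in> Kn_V n"
  shows "gdist (Kn_V n) Kn_E u v = (if u = v then 0 else 1)"
proof (cases "u = v")
  case True
  have "is_walk (Kn_V n) Kn_E [v]" using assms by (simp add: is_walk_def)
  hence "gdist (Kn_V n) Kn_E u v \<le> 0" unfolding gdist_def using True
    by (intro Least_le) (rule exI[of _ "[v]"], simp)
  thus ?thesis using True by simp
next
  case False
  have w: "is_walk (Kn_V n) Kn_E [u,v]" using assms False
    by (auto simp: is_walk_def Kn_E_def less_Suc_eq)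
  have "gdist (Kn_V n) Kn_E u v = 1" unfolding gdist_def
  proof (rule Least_equality)
    show "\<exists>xs. is_walk (Kn_V n) Kn_E xs \<and> hd xs = u \<and> last xs = v \<and> length xs = Suc 1"
      using w by (intro exI[of _ "[u,v]"]) simp
  next
    fix y assume "\<exists>xs. is_walk (Kn_V n) Kn_E xs \<and> hd xs = u \<and> last xs = v \<and> length xs = Suc y"
    then obtain xs where "hd xs = u" "last xs = v" "length xs = Suc y" by blast
    then show "1 \<le> y" using False
      by (cases xs) (auto simp: Suc_le_eq)
  qed
  thus ?thesis using False by simp
qed

lemma gball0:
  assumes "v \<in> Kn_V n" shows "gball (Kn_V n) Kn_E v 0 = {v}"
  using assms by (auto simp: gball_def gdist_Kn split: if_splits)

lemma gball1:
  assumes "v \<in> Kn_V n" shows "gball (Kn_V n) Kn_E v 1 = Kn_V n"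
  using assms by (auto simp: gball_def gdist_Kn)

lemma ratio_le:
  assumes "finite V"
  shows "(\<Sum>u\<in>gball V E v r. \<bar>f u\<bar>) / real (card (gball V E v r)) \<le> (\<Sum>u\<in>V. \<bar>f u\<bar>)"
proof -
  have sub: "gball V E v r \<subseteq> V" by (auto simp: gball_def)
  have "(\<Sum>u\<in>gball V E v r. \<bar>f u\<bar>) \<le> (\<Sum>u\<in>V. \<bar>f u\<bar>)"
    by (rule sum_mono2[OF assms sub]) auto
  moreover have "(\<Sum>u\<in>gball V E v r. \<bar>f u\<bar>) \<ge> 0" by (simp add: sum_nonneg)
  moreover have "(\<Sum>u\<in>V. \<bar>f u\<bar>) \<ge> 0" by (simp add: sum_nonneg)
  ultimately show ?thesis
  proof (cases "card (gball V E v r) = 0")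
    case False
    assume a: "(\<Sum>u\<in>gball V E v r. \<bar>f u\<bar>) \<le> (\<Sum>u\<in>V. \<bar>f u\<bar>)" "(\<Sum>u\<in>V. \<bar>f u\<bar>) \<ge> 0"
    have "(\<Sum>u\<in>V. \<bar>f u\<bar>) * 1 \<le> (\<Sum>u\<in>V. \<bar>f u\<bar>) * real (card (gball V E v r))"
      using False a by (intro mult_left_mono) auto
    then show ?thesis using False a by (simp add: divide_le_eq)
  qed auto
qed

lemma bdd_ratio:
  assumes "finite V"
  shows "bdd_above ((\<lambda>r. (\<Sum>u\<in>gball V E v r. \<bar>f u\<bar>) / real (card (gball V E v r))) ` {0..})"
  using ratio_le[OF assms] by (intro bdd_aboveI2) 

lemma maxfun_ge:
  assumes "finite V" "r \<ge> 0"
  shows "(\<Sum>u\<in>gball V E v r. \<bar>f u\<bar>) / real (card (gball V E v r)) \<le> maxfun V E f v"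
  unfolding maxfun_def using assms by (intro cSUP_upper bdd_ratio) auto

lemma maxfun_le:
  assumes "finite V"
  shows "maxfun V E f v \<le> (\<Sum>u\<in>V. \<bar>f u\<bar>)"
  unfolding maxfun_def using ratio_le[OF assms] by (intro cSUP_least) auto

lemma maxfun_nonneg:
  assumes "finite V"
  shows "0 \<le> maxfun V E f v"
proof -
  have "0 \<le> (\<Sum>u\<in>gball V E v 0. \<bar>f u\<bar>) / real (card (gball V E v 0))"
    by (simp add: sum_nonneg)
  also have "\<dots> \<le> maxfun V E f v" by (rule maxfun_ge[OF assms]) simp
  finally show ?thesis .
qed

lemma pnorm_pos:
  assumes "finite V" "p > 0" "v \<in> V" "f v \<noteq> 0"
  shows "pnorm V p f > 0"
proof -
  have "0 < \<bar>f v\<bar> powr p" using assms by simp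
  also have "\<dots> \<le> (\<Sum>u\<in>V. \<bar>f u\<bar> powr p)"
    using assms by (intro member_le_sum) auto
  finally show ?thesis unfolding pnorm_def by simp
qed

lemma abs_le_pnorm:
  assumes "finite V" "p > 0" "v \<in> V"
  shows "\<bar>f v\<bar> \<le> pnorm V p f"
proof -
  have "\<bar>f v\<bar> = (\<bar>f v\<bar> powr p) powr (1/p)" using assms by (simp add: powr_powr)
  also have "\<dots> \<le> (\<Sum>u\<in>V. \<bar>f u\<bar> powr p) powr (1/p)"
    using assms by (intro powr_mono2 member_le_sum) auto
  finally show ?thesis unfolding pnorm_def .
qed

lemma ratio_bound:
  assumes "finite V" "p > 0" "v \<in> V" "f v \<noteq> 0"
  shows "pnorm V p (maxfun V E f) / pnorm V p f \<le> real (card V) powr (1/p) * real (card V)"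
proof -
  define P where "P = pnorm V p f"
  have P: "P > 0" using pnorm_pos[of V p v f] assms by (simp add: P_def)
  define T where "T = (\<Sum>u\<in>V. \<bar>f u\<bar>)"
  have "T \<le> (\<Sum>u\<in>V. P)" unfolding T_def P_def
    using abs_le_pnorm[OF assms(1,2)] by (intro sum_mono) auto
  hence T: "T \<le> real (card V) * P" by simp
  have T0: "0 \<le> T" unfolding T_def by (simp add: sum_nonneg)
  have "pnorm V p (maxfun V E f) \<le> (\<Sum>u\<in>V. T powr p) powr (1/p)"
    unfolding pnorm_def using assms maxfun_nonneg[OF assms(1)] maxfun_le[OF assms(1)]
    by (intro powr_mono2 sum_mono sum_nonneg) (auto simp: T_def)
  also have "\<dots> = (real (card V) * T powr p) powr (1/p)" by simp
  also have "\<dots> = real (card V) powr (1/p) * T"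
    using T0 assms by (simp add: powr_mult powr_powr)
  also have "\<dots> \<le> real (card V) powr (1/p) * (real (card V) * P)"
    by (intro mult_left_mono T) simp
  finally show ?thesis using P unfolding P_def[symmetric]
    by (simp add: divide_le_eq mult.assoc)
qed

lemma bdd_op:
  assumes "finite V" "p > 0"
  shows "bdd_above ((\<lambda>f. pnorm V p (maxfun V E f) / pnorm V p f) ` {f. \<exists>v\<in>V. f v \<noteq> 0})"
  using ratio_bound[OF assms(1,2)] by (intro bdd_aboveI2) blast

lemma main_bound:
  fixes \<alpha> p :: real and k n :: nat
  assumes a: "\<alpha> > 1" and k: "1 \<le> k" "k \<le> n" and p: "p > 0"
  shows "(real k * \<alpha> powr (real n / real k) + \<alpha> * real (n - k))
               / (real k * \<alpha> powr (real n / real k) + real (n - k))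
         \<le> maxop_norm (Kn_V n) Kn_E p powr p"
proof -
  define V where "V = Kn_V n"
  have finV: "finite V" and cardV: "card V = n" by (auto simp: V_def Kn_V_def)
  define x where "x = \<alpha> powr (real n / (real k * p))"
  have x1: "x > 1" unfolding x_def using a k p by (intro gr_one_powr) auto
  define X where "X = \<alpha> powr (real n / real k)"
  have xX: "x powr p = X" unfolding x_def X_def using a p k by (simp add: powr_powr)
  have X0: "X > 0" unfolding X_def using a by simp
  define f where "f = (\<lambda>v::nat. if v < k then x else 1)"
  have split: "(\<Sum>v\<in>V. h v) = (\<Sum>v\<in>{0..<k}. h v) + (\<Sum>v\<in>{k..<n}. h v)" for h :: "nat \<Rightarrow> real"
    unfolding V_def Kn_V_def using k by (simp add: sum.atLeastLessThan_concat)
  have splitp: "(\<Prod>v\<in>V. h v) = (\<Prod>v\<in>{0..<k}. h v) * (\<Prod>v\<in>{k..<n}. h v)" for h :: "nat \<Rightarrow> real"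
    unfolding V_def Kn_V_def using k by (simp add: prod.atLeastLessThan_concat)
  define Sf where "Sf = real k * X + real (n - k)"
  have Sf: "(\<Sum>v\<in>V. \<bar>f v\<bar> powr p) = Sf"
    unfolding split Sf_def f_def using x1 xX by simp
  have Sf0: "Sf > 0" unfolding Sf_def using X0 k by (simp add: add_pos_nonneg)
  define T where "T = real k * x + real (n - k)"
  have T: "(\<Sum>v\<in>V. \<bar>f v\<bar>) = T" unfolding split T_def f_def using x1 by simp
  have "(\<Sum>v\<in>V. \<bar>f v\<bar> / real (card V)) \<ge> (\<Prod>v\<in>V. \<bar>f v\<bar>) powr (1 / real (card V))"
    using finV k cardV by (intro arith_geom_mean) auto
  moreover have "(\<Sum>v\<in>V. \<bar>f v\<bar> / real (card V)) = T / real n"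
    using T cardV by (simp add: sum_divide_distrib[symmetric])
  moreover have "(\<Prod>v\<in>V. \<bar>f v\<bar>) = x ^ k" unfolding splitp f_def using x1 by simp
  ultimately have am: "T / real n \<ge> (x ^ k) powr (1 / real n)" using cardV by simp
  have "(x ^ k) powr (1 / real n) = x powr (real k / real n)"
    using x1 by (simp add: powr_realpow[symmetric] powr_powr)
  hence "(T / real n) powr p \<ge> (x powr (real k / real n)) powr p"
    using am x1 p by (intro powr_mono2) auto
  moreover have "(x powr (real k / real n)) powr p = \<alpha>"
    unfolding x_def using a p k by (simp add: powr_powr)
  ultimately have Tp: "(T / real n) powr p \<ge> \<alpha>" by simp
  have vV: "v \<in> V \<longleftrightarrow> v < n" for v by (simp add: V_def Kn_V_def)
  have M1: "maxfun V Kn_E f v \<ge> \<bar>f v\<bar>" if "v \<in> V" for v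
    using maxfun_ge[OF finV, where r=0 and E=Kn_E and v=v and f=f] gball0[of v n] that by (simp add: V_def)
  have M2: "maxfun V Kn_E f v \<ge> T / real n" if "v \<in> V" for v
    using maxfun_ge[OF finV, where r=1 and E=Kn_E and v=v and f=f] gball1[of v n] that T cardV by (simp add: V_def)
  define SM where "SM = (\<Sum>v\<in>V. \<bar>maxfun V Kn_E f v\<bar> powr p)"
  have "(\<Sum>v\<in>V. (if v < k then X else \<alpha>)) \<le> SM"
    unfolding SM_def
  proof (intro sum_mono)
    fix v assume v: "v \<in> V"
    show "(if v < k then X else \<alpha>) \<le> \<bar>maxfun V Kn_E f v\<bar> powr p"
    proof (cases "v < k")
      case True
      have "X = \<bar>f v\<bar> powr p" using True xX x1 by (simp add: f_def)
      also have "\<dots> \<le> \<bar>maxfun V Kn_E f v\<bar> powr p" using M1[OF v] p by (intro powr_mono2) auto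
      finally show ?thesis using True by simp
    next
      case False
      have "\<alpha> \<le> (T / real n) powr p" by (rule Tp)
      also have "\<dots> \<le> \<bar>maxfun V Kn_E f v\<bar> powr p" using M2[OF v] p x1 k
        by (intro powr_mono2) (auto simp: T_def)
      finally show ?thesis using False by simp
    qed
  qed
  moreover have "(\<Sum>v\<in>V. (if v < k then X else \<alpha>)) = real k * X + \<alpha> * real (n - k)"
    unfolding split by simp
  ultimately have SMge: "real k * X + \<alpha> * real (n - k) \<le> SM" by simp
  have fnz: "f \<in> {f. \<exists>v\<in>V. f v \<noteq> 0}" using k x1 by (auto simp: f_def vV intro!: exI[of _ 0])
  have "pnorm V p (maxfun V Kn_E f) / pnorm V p f \<le> maxop_norm V Kn_E p"
    unfolding maxop_norm_def using fnz bdd_op[OF finV p] by (intro cSUP_upper) auto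
  moreover have "pnorm V p (maxfun V Kn_E f) / pnorm V p f = (SM / Sf) powr (1/p)"
    unfolding pnorm_def SM_def[symmetric] Sf using Sf0 by (simp add: powr_divide SM_def sum_nonneg)
  ultimately have "((SM / Sf) powr (1/p)) powr p \<le> maxop_norm V Kn_E p powr p"
    using p by (intro powr_mono2) auto
  moreover have "((SM / Sf) powr (1/p)) powr p = SM / Sf"
    using p Sf0 by (simp add: powr_powr SM_def sum_nonneg)
  moreover have "(real k * X + \<alpha> * real (n - k)) / Sf \<le> SM / Sf"
    using SMge Sf0 by (simp add: divide_right_mono)
  ultimately show ?thesis unfolding Sf_def X_def V_def by simp
qed


theorem lemma3p2:
  fixes n :: nat
  shows "Liminf at_top (\<lambda>p::real. ereal (maxop_norm (Kn_V n) Kn_E p powr p))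
     \<ge> (SUP ak\<in>{\<alpha>::real. \<alpha> > 1} \<times> {1..n}.
          ereal ((real (snd ak) * fst ak powr (real n / real (snd ak)) + fst ak * real (n - snd ak))
               / (real (snd ak) * fst ak powr (real n / real (snd ak)) + real (n - snd ak))))"
proof (rule SUP_least)
  fix ak :: "real \<times> nat" assume "ak \<in> {\<alpha>::real. \<alpha> > 1} \<times> {1..n}"
  then obtain \<alpha> k where ak: "ak = (\<alpha>, k)" "\<alpha> > 1" "1 \<le> k" "k \<le> n" by auto
  show "ereal ((real (snd ak) * fst ak powr (real n / real (snd ak)) + fst ak * real (n - snd ak))
               / (real (snd ak) * fst ak powr (real n / real (snd ak)) + real (n - snd ak)))
        \<le> Liminf at_top (\<lambda>p::real. ereal (maxop_norm (Kn_V n) Kn_E p powr p))"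
  proof (rule Liminf_bounded)
    show "\<forall>\<^sub>F p in at_top. ereal ((real (snd ak) * fst ak powr (real n / real (snd ak)) + fst ak * real (n - snd ak))
               / (real (snd ak) * fst ak powr (real n / real (snd ak)) + real (n - snd ak)))
        \<le> ereal (maxop_norm (Kn_V n) Kn_E p powr p)"
      using eventually_gt_at_top[of "0::real"]
    proof (rule eventually_mono)
      fix p :: real assume "p > 0"
      then show "ereal ((real (snd ak) * fst ak powr (real n / real (snd ak)) + fst ak * real (n - snd ak))
               / (real (snd ak) * fst ak powr (real n / real (snd ak)) + real (n - snd ak)))
        \<le> ereal (maxop_norm (Kn_V n) Kn_E p powr p)"
        using main_bound[of \<alpha> k n p] ak by simp
    qed
  qed
qed

end
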